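(* Let $\gamma$ be a closed path in $E(\mathbb C)$, avoiding $E(\mathbb Q)$, whose homology class generates $H_1(E(\mathbb C),\mathbb Z)^-$. Then $$\int_\gamma\eta(x_1,y_1)=-7\int_\gamma\eta(x,y),\qquad \int_\gamma\eta(x_2,y_2)=-5\int_\gamma\eta(x,y).$$
   Context: Let $E$ be the elliptic curve $y^2+y=x^3-x$ over $\mathbb Q$. On $E$, define the functions $x_1=x-1$, $y_1=y-2x+2$, $x_2=x-1$ and $y_2=-x+y+1$. Here $E(\mathbb Q)$ is generated by $(0,0)$, and the zeros and poles of all six functions $x,y,x_1,y_1,x_2,y_2$ lie in $E(\mathbb Q)$. For nonconstant functions $f,g$ on $E$, let $\eta(f,g)=\log|f|\,d\arg g-\log|g|\,d\arg f$. This is a real $1$-form on $E(\mathbb C)$ minus the zeros and poles of $f$ and $g$. $H_1(E(\mathbb C),\mathbb Z)^-$ denotes the subgroup of $H_1(E(\mathbb C),\mathbb Z)$ on which complex conjugation acts by $-1$. For each of the pairs $(f,g)=(x,y),(x_1,y_1),(x_2,y_2)$, the integral $\int_\gamma\eta(f,g)$ depends only on the homology class of $\gamma$ in $E(\mathbb C)$. The orientation of $\gamma$ is fixed once, and the same $\gamma$ is used on both sides of each identity. *)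

theory Defs
  imports "HOL-Analysis.Analysis" "HOL-Homology.Homology"
begin

definition E_aff :: "(complex \<times> complex) set" where
  "E_aff = {(x, y). y^2 + y = x^3 - x}"

text \<open>Affine rational points of E (E(Q) minus the point at infinity).\<close>
definition E_rat :: "(complex \<times> complex) set" where
  "E_rat = {(x, y). (x, y) \<in> E_aff \<and> x \<in> \<rat> \<and> y \<in> \<rat>}"

definition E_top :: "(complex \<times> complex) topology" where
  "E_top = subtopology euclidean E_aff"

definition conjE :: "complex \<times> complex \<Rightarrow> complex \<times> complex" where
  "conjE p = (cnj (fst p), cnj (snd p))"

definition fx :: "complex \<times> complex \<Rightarrow> complex" where "fx p = fst p"
definition fy :: "complex \<times> complex \<Rightarrow> complex" where "fy p = snd p"
definition fx1 :: "complex \<times> complex \<Rightarrow> complex" where "fx1 p = fst p - 1"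
definition fy1 :: "complex \<times> complex \<Rightarrow> complex" where "fy1 p = snd p - 2 * fst p + 2"
definition fx2 :: "complex \<times> complex \<Rightarrow> complex" where "fx2 p = fst p - 1"
definition fy2 :: "complex \<times> complex \<Rightarrow> complex" where "fy2 p = - fst p + snd p + 1"

text \<open>Line integral of eta(f,g) = log|f| d arg g - log|g| d arg f along a path
  gamma parametrised on [0,1]; d arg h = Im (dh / h).\<close>
definition eta_integral ::
  "(complex \<times> complex \<Rightarrow> complex) \<Rightarrow> (complex \<times> complex \<Rightarrow> complex) \<Rightarrow>
   (real \<Rightarrow> complex \<times> complex) \<Rightarrow> real" where
  "eta_integral f g \<gamma> = integral {0..1} (\<lambda>t.
      ln (cmod (f (\<gamma> t))) * Im (vector_derivative (g \<circ> \<gamma>) (at t) / g (\<gamma> t))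
    - ln (cmod (g (\<gamma> t))) * Im (vector_derivative (f \<circ> \<gamma>) (at t) / f (\<gamma> t)))"

text \<open>The singular 1-simplex traced out by a path gamma : [0,1] -> X
  (vertex e_0 goes to gamma 0, vertex e_1 to gamma 1).\<close>
definition path_simplex :: "(real \<Rightarrow> 'a) \<Rightarrow> (nat \<Rightarrow> real) \<Rightarrow> 'a" where
  "path_simplex \<gamma> = restrict (\<lambda>v. \<gamma> (v 1)) (standard_simplex 1)"

definition loop_class :: "'a topology \<Rightarrow> (real \<Rightarrow> 'a) \<Rightarrow> 'a chain set" where
  "loop_class X \<gamma> = homologous_rel_set 1 X {} (frag_of (path_simplex \<gamma>))"

definition H1_minus :: "(complex \<times> complex) chain set set" where
  "H1_minus = {a \<in> carrier (homology_group 1 E_top).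
      hom_induced 1 E_top {} E_top {} conjE a = inv\<^bsub>homology_group 1 E_top\<^esub> a}"

end

theory Submission
  imports Defs "HOL-Complex_Analysis.Complex_Analysis"
begin

definition slit :: "complex set" where "slit = {z. 1 - z \<notin> \<real>\<^sub>\<le>\<^sub>0}"

lemma slit_iff: "z \<in> slit \<longleftrightarrow> Im z \<noteq> 0 \<or> Re z < 1"
  by (auto simp: slit_def complex_nonpos_Reals_iff)

lemma open_slit: "open slit"
proof -
  have "slit = {z. Im z < 0} \<union> {z. Im z > 0} \<union> {z. Re z < 1}"
    by (auto simp: slit_iff)
  moreover have "open ({z. Im z < 0} \<union> {z. Im z > 0} \<union> {z. Re z < 1})"
    by (intro open_Un open_halfspace_Im_lt open_halfspace_Im_gt open_halfspace_Re_lt)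
  ultimately show ?thesis by simp
qed

lemma starlike_slit: "starlike slit"
  unfolding starlike_def
proof (intro bexI ballI)
  show "0 \<in> slit" by (simp add: slit_iff)
  fix x assume x: "x \<in> slit"
  show "closed_segment 0 x \<subseteq> slit"
  proof
    fix w assume "w \<in> closed_segment 0 x"
    then obtain u where u: "0 \<le> u" "u \<le> 1" "w = u *\<^sub>R x" by (auto simp: closed_segment_def)
    have "u * Im x \<noteq> 0 \<or> u * Re x < 1"
    proof (cases "u = 0")
      case True then show ?thesis by simp
    next
      case False
      then have "u > 0" using u by simp
      show ?thesis
      proof (cases "Im x = 0")
        case True
        then have "Re x < 1" using x by (simp add: slit_iff)
        then show ?thesis using u `u > 0`
          by (smt (verit) mult_left_le_one_le mult_nonneg_nonpos)
      next
        case False then show ?thesis using `u > 0` by simp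
      qed
    qed
    then show "w \<in> slit" using u by (simp add: slit_iff)
  qed
qed

definition gfun :: "complex \<Rightarrow> complex" where
  "gfun z = (if z = 0 then 1 else - Ln (1 - z) / z)"

lemma gfun_holo: "gfun holomorphic_on (slit - {0})"
proof -
  have "(\<lambda>z. - Ln (1 - z) / z) holomorphic_on (slit - {0})"
    by (intro holomorphic_intros) (auto simp: slit_def)
  then show ?thesis
    by (rule holomorphic_transform) (simp add: gfun_def)
qed

lemma gfun_cont0: "isCont gfun 0"
proof -
  have "(Ln has_field_derivative inverse (1 - 0)) (at (1 - 0))"
    by (rule has_field_derivative_Ln) simp
  then have "((\<lambda>z. Ln (1 - z)) has_field_derivative (inverse (1 - 0) * (-1))) (at 0)"
    using DERIV_chain2[of Ln "inverse (1-0)" "\<lambda>z. 1 - z" 0 "-1"]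
    by (auto intro!: derivative_eq_intros)
  then have "((\<lambda>y. (Ln (1 - y) - Ln (1 - 0)) / (y - 0)) \<longlongrightarrow> -1) (at 0)"
    using has_field_derivativeD by force
  then have "((\<lambda>y. - (Ln (1 - y) / y)) \<longlongrightarrow> 1) (at 0)"
    using tendsto_minus by fastforce
  then have "(gfun \<longlongrightarrow> 1) (at 0)"
    by (rule Lim_transform_eventually)
       (auto simp: gfun_def eventually_at_filter)
  then show ?thesis by (simp add: continuous_at gfun_def)
qed

lemma gfun_cont: "continuous_on slit gfun"
proof -
  have "isCont gfun z" if "z \<in> slit" for z
  proof (cases "z = 0")
    case True then show ?thesis using gfun_cont0 by simp
  next
    case False
    have "open (slit - {0})" using open_slit by auto
    then show ?thesis using gfun_holo that False
      by (meson DiffI continuous_on_eq_continuous_at holomorphic_on_imp_continuous_on singletonD)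
  qed
  then show ?thesis by (simp add: continuous_at_imp_continuous_on)
qed

lemma Li_exists: "\<exists>L. \<forall>x\<in>slit. (L has_field_derivative gfun x) (at x)"
proof (rule holomorphic_starlike_primitive[OF gfun_cont starlike_slit open_slit, of "{0}"])
  show "finite {0::complex}" by simp
  fix x assume "x \<in> slit - {0}"
  then show "gfun field_differentiable at x"
    using gfun_holo open_slit holomorphic_on_imp_differentiable_at
    by (metis open_delete)
qed

definition Li :: "complex \<Rightarrow> complex" where
  "Li = (SOME L. \<forall>x\<in>slit. (L has_field_derivative gfun x) (at x))"

lemma Li_deriv: "x \<in> slit \<Longrightarrow> (Li has_field_derivative gfun x) (at x)"
  using someI_ex[OF Li_exists] unfolding Li_def by blast

definition D0 :: "complex \<Rightarrow> real" where
  "D0 z = Im (Li z) + Im (Ln (1 - z)) * ln (cmod z)"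

definition U2 :: "complex set" where "U2 = {z. z \<in> slit \<and> 1 - z \<in> slit}"

lemma U2_iff: "z \<in> U2 \<longleftrightarrow> Im z \<noteq> 0 \<or> (0 < Re z \<and> Re z < 1)"
  by (auto simp: U2_def slit_iff)

lemma open_U2: "open U2"
proof -
  have "U2 = slit \<inter> (\<lambda>z. 1 - z) -` slit" by (auto simp: U2_def)
  moreover have "open ((\<lambda>z. 1 - z) -` slit)"
    by (intro open_vimage open_slit continuous_intros)
  ultimately show ?thesis using open_slit open_Int by metis
qed

lemma starlike_U2: "starlike U2"
  unfolding starlike_def
proof (intro bexI ballI)
  show "1/2 \<in> U2" by (simp add: U2_iff)
  fix x assume x: "x \<in> U2"
  show "closed_segment (1/2) x \<subseteq> U2"
  proof
    fix w assume "w \<in> closed_segment (1/2) x"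
    then obtain u where u: "0 \<le> u" "u \<le> 1" "w = (1 - u) *\<^sub>R (1/2) + u *\<^sub>R x"
      by (auto simp: closed_segment_def)
    have "u * Im x \<noteq> 0 \<or> (0 < (1-u)/2 + u * Re x \<and> (1-u)/2 + u * Re x < 1)"
    proof (cases "u = 0")
      case True then show ?thesis by simp
    next
      case False
      then have "u > 0" using u by simp
      show ?thesis
      proof (cases "Im x = 0")
        case True
        then have "0 < Re x" "Re x < 1" using x by (auto simp: U2_iff)
        moreover have "u * Re x < u"
          using `u > 0` `Re x < 1` mult_strict_left_mono[of "Re x" 1 u] by simp
        moreover have "0 < u * Re x"
          using `u > 0` `0 < Re x` by simp
        ultimately have "0 < (1-u)/2 + u * Re x \<and> (1-u)/2 + u * Re x < 1" using u(1,2) by (intro conjI; simp add: field_simps; linarith)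
        then show ?thesis by blast
      next
        case False then show ?thesis using `u > 0` by simp
      qed
    qed
    then show "w \<in> U2" using u by (simp add: U2_iff)
  qed
qed

definition Kf :: "complex \<Rightarrow> complex" where
  "Kf z = Li z + Li (1 - z) + Ln z * Ln (1 - z)"

lemma Kf_deriv: assumes "z \<in> U2" shows "(Kf has_field_derivative 0) (at z)"
proof -
  have z1: "z \<in> slit" and z2: "1 - z \<in> slit" using assms by (auto simp: U2_def)
  have nz: "z \<noteq> 0" "1 - z \<noteq> 0" using z1 z2 by (auto simp: slit_iff)
  have l1: "z \<notin> \<real>\<^sub>\<le>\<^sub>0" using z2 by (simp add: slit_def)
  have l2: "1 - z \<notin> \<real>\<^sub>\<le>\<^sub>0" using z1 by (simp add: slit_def)
  have m1: "((\<lambda>w. 1 - w) has_field_derivative -1) (at z)"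
    by (auto intro!: derivative_eq_intros)
  have d1: "((\<lambda>w. Li (1 - w)) has_field_derivative gfun (1 - z) * (-1)) (at z)"
    using DERIV_chain2[of Li "gfun (1 - z)" "\<lambda>w. 1 - w" z "-1" UNIV] Li_deriv[OF z2] m1 by blast
  have d2: "((\<lambda>w. Ln (1 - w)) has_field_derivative inverse (1 - z) * (-1)) (at z)"
    using DERIV_chain2[of Ln "inverse (1 - z)" "\<lambda>w. 1 - w" z "-1" UNIV] has_field_derivative_Ln[OF l2] m1
    by blast
  have d3: "((\<lambda>w. Ln w * Ln (1 - w)) has_field_derivative Ln z * (inverse (1 - z) * (-1)) + inverse z * Ln (1 - z)) (at z)"
    by (rule DERIV_mult'[OF has_field_derivative_Ln[OF l1] d2])
  have "(Kf has_field_derivative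
     gfun z + gfun (1 - z) * (-1) + (Ln z * (inverse (1 - z) * (-1)) + inverse z * Ln (1 - z))) (at z)"
    unfolding Kf_def
    by (rule DERIV_add[OF DERIV_add[OF Li_deriv[OF z1] d1] d3])
  moreover have "gfun z + gfun (1 - z) * (-1) + (Ln z * (inverse (1 - z) * (-1)) + inverse z * Ln (1 - z)) = 0"
  proof -
    have g1: "gfun z = - Ln (1 - z) * inverse z" using nz by (simp add: gfun_def divide_inverse)
    have g2: "gfun (1 - z) = - Ln z * inverse (1 - z)" using nz by (simp add: gfun_def divide_inverse)
    show ?thesis unfolding g1 g2 by (simp add: algebra_simps)
  qed
  ultimately show ?thesis by simp
qed

lemma Kf_const: "z \<in> U2 \<Longrightarrow> Kf z = Kf (1/2)"
proof -
  have "connected U2" by (rule starlike_imp_connected[OF starlike_U2])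
  moreover have "continuous_on U2 Kf"
    by (meson DERIV_isCont Kf_deriv continuous_at_imp_continuous_on)
  ultimately obtain c where c: "\<And>x. x \<in> U2 \<Longrightarrow> Kf x = c"
    using DERIV_zero_connected_constant[of U2 "{}" Kf] open_U2 Kf_deriv by auto
  have "1/2 \<in> U2" by (simp add: U2_iff)
  assume "z \<in> U2"
  then show ?thesis using c `1/2 \<in> U2` by metis
qed

definition c0 :: real where "c0 = Im (Kf (1/2))"

lemma D0_sym: assumes "z \<in> U2" shows "D0 z + D0 (1 - z) = c0"
proof -
  have z1: "z \<in> slit" and z2: "1 - z \<in> slit" using assms by (auto simp: U2_def)
  have nz: "z \<noteq> 0" "1 - z \<noteq> 0" using z1 z2 by (auto simp: slit_iff)
  have "Im (Kf z) = c0" using Kf_const[OF assms] by (simp add: c0_def)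
  then show ?thesis using nz
    by (simp add: Kf_def D0_def Re_Ln algebra_simps)
qed

definition Dfun :: "complex \<Rightarrow> real" where
  "Dfun z = (if z \<in> slit then D0 z else c0 - D0 (1 - z))"

lemma Dfun1: "z \<in> slit \<Longrightarrow> Dfun z = D0 z" by (simp add: Dfun_def)
lemma Dfun2: assumes "1 - z \<in> slit" shows "Dfun z = c0 - D0 (1 - z)"
proof (cases "z \<in> slit")
  case True
  then have "z \<in> U2" using assms by (simp add: U2_def)
  then show ?thesis using D0_sym True by (simp add: Dfun_def algebra_simps)
qed (simp add: Dfun_def)

lemma eventually_in_open_path:
  assumes "(q has_vector_derivative q') (at t)" "open S" "q t \<in> S"
  shows "eventually (\<lambda>s. q s \<in> S) (at t)"
proof -
  have "isCont q t" using has_vector_derivative_continuous assms(1) by blast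
  then have "(q \<longlongrightarrow> q t) (at t)" by (rule isContD)
  then show ?thesis by (rule topological_tendstoD[OF _ assms(2,3)])
qed

lemma real_deriv_transform_ev:
  assumes "(f has_real_derivative f') (at t)" "eventually (\<lambda>s. f s = g s) (at t)" "f t = g t"
  shows "(g has_real_derivative f') (at t)"
  using assms unfolding has_field_derivative_def
  by (metis has_derivative_transform_eventually UNIV_I)

lemma ln_cmod_deriv:
  assumes q: "(q has_vector_derivative q') (at t)" and nz: "q t \<noteq> 0"
  shows "((\<lambda>s. ln (cmod (q s))) has_real_derivative Re (q' / q t)) (at t)"
proof -
  have ev: "eventually (\<lambda>s. q s \<in> -{0}) (at t)"
    by (rule eventually_in_open_path[OF q]) (use nz in auto)
  show ?thesis
  proof (cases "q t \<in> \<real>\<^sub>\<le>\<^sub>0")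
    case False
    have "((\<lambda>s. Ln (q s)) has_vector_derivative q' * inverse (q t)) (at t)"
      using field_vector_diff_chain_at[OF q has_field_derivative_Ln[OF False]] by (simp add: o_def)
    then have "((\<lambda>s. Re (Ln (q s))) has_vector_derivative Re (q' * inverse (q t))) (at t)"
      by (rule bounded_linear.has_vector_derivative[OF bounded_linear_Re])
    then have d: "((\<lambda>s. Re (Ln (q s))) has_real_derivative Re (q' / q t)) (at t)"
      by (simp add: has_real_derivative_iff_has_vector_derivative divide_inverse)
    show ?thesis
    proof (rule real_deriv_transform_ev[OF d])
      show "eventually (\<lambda>s. Re (Ln (q s)) = ln (cmod (q s))) (at t)"
        by (rule eventually_mono[OF ev]) simp
      show "Re (Ln (q t)) = ln (cmod (q t))" using nz by simp
    qed
  next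
    case True
    then have F: "- q t \<notin> \<real>\<^sub>\<le>\<^sub>0" using nz by (auto simp: complex_nonpos_Reals_iff complex_eq_iff)
    have q2: "((\<lambda>s. - q s) has_vector_derivative - q') (at t)"
      using q by (rule has_vector_derivative_minus)
    have "((\<lambda>s. Ln (- q s)) has_vector_derivative (- q') * inverse (- q t)) (at t)"
      using field_vector_diff_chain_at[OF q2 has_field_derivative_Ln[OF F]] by (simp add: o_def)
    then have "((\<lambda>s. Re (Ln (- q s))) has_vector_derivative Re ((- q') * inverse (- q t))) (at t)"
      by (rule bounded_linear.has_vector_derivative[OF bounded_linear_Re])
    then have d: "((\<lambda>s. Re (Ln (- q s))) has_real_derivative Re (q' / q t)) (at t)"
      by (simp add: has_real_derivative_iff_has_vector_derivative divide_inverse)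
    show ?thesis
    proof (rule real_deriv_transform_ev[OF d])
      show "eventually (\<lambda>s. Re (Ln (- q s)) = ln (cmod (q s))) (at t)"
        by (rule eventually_mono[OF ev]) simp
      show "Re (Ln (- q t)) = ln (cmod (q t))" using nz by simp
    qed
  qed
qed

lemma aux_c: fixes a b c :: complex shows "a * (- b / c) = - (b * (a / c))"
  by (simp add: divide_inverse)

lemma aux_im: fixes a b :: complex shows "Im (-(a*b)) = -(Re a * Im b + Im a * Re b)"
  by simp

lemma aux_r1: fixes A B C P Q R X :: real assumes "X = -(B * P + C * Q)"
  shows "X + (R * A + Q * C) = A * R - B * P"
  using assms by (simp add: algebra_simps)

lemma aux_r2: fixes A B P R :: real
  shows "0 - (B * P - A * R) = A * R - B * P"
  by (simp add: algebra_simps)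

lemma D0_path:
  assumes q: "(q has_vector_derivative q') (at t)" and sl: "q t \<in> slit" and nz: "q t \<noteq> 0"
  shows "((\<lambda>s. D0 (q s)) has_real_derivative
           (ln (cmod (q t)) * Im (- q' / (1 - q t)) - ln (cmod (1 - q t)) * Im (q' / q t))) (at t)"
proof -
  have l2: "1 - q t \<notin> \<real>\<^sub>\<le>\<^sub>0" using sl by (simp add: slit_def)
  have nz1: "1 - q t \<noteq> 0" using l2 by auto
  have "((\<lambda>s. Li (q s)) has_vector_derivative q' * gfun (q t)) (at t)"
    using field_vector_diff_chain_at[OF q Li_deriv[OF sl]] by (simp add: o_def)
  then have "((\<lambda>s. Im (Li (q s))) has_vector_derivative Im (q' * gfun (q t))) (at t)"
    by (rule bounded_linear.has_vector_derivative[OF bounded_linear_Im])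
  then have d1: "((\<lambda>s. Im (Li (q s))) has_real_derivative Im (q' * gfun (q t))) (at t)"
    by (simp add: has_real_derivative_iff_has_vector_derivative)
  have q1: "((\<lambda>s. 1 - q s) has_vector_derivative 0 - q') (at t)"
    by (intro has_vector_derivative_diff q has_vector_derivative_const)
  have "((\<lambda>s. Ln (1 - q s)) has_vector_derivative (0 - q') * inverse (1 - q t)) (at t)"
    using field_vector_diff_chain_at[OF q1 has_field_derivative_Ln[OF l2]] by (simp add: o_def)
  then have "((\<lambda>s. Im (Ln (1 - q s))) has_vector_derivative Im ((0 - q') * inverse (1 - q t))) (at t)"
    by (rule bounded_linear.has_vector_derivative[OF bounded_linear_Im])
  then have d2: "((\<lambda>s. Im (Ln (1 - q s))) has_real_derivative Im (- q' / (1 - q t))) (at t)"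
    by (simp add: has_real_derivative_iff_has_vector_derivative divide_inverse)
  note d3 = ln_cmod_deriv[OF q nz]
  have "((\<lambda>s. D0 (q s)) has_real_derivative
          Im (q' * gfun (q t)) + (Im (- q' / (1 - q t)) * ln (cmod (q t)) + Re (q' / q t) * Im (Ln (1 - q t)))) (at t)"
    unfolding D0_def by (rule DERIV_add[OF d1 DERIV_mult[OF d2 d3]])
  moreover
  have "Im (q' * gfun (q t)) = - (ln (cmod (1 - q t)) * Im (q' / q t) + Im (Ln (1 - q t)) * Re (q' / q t))"
  proof -
    have g: "gfun (q t) = - Ln (1 - q t) / q t" using nz by (simp add: gfun_def)
    have "q' * gfun (q t) = - (Ln (1 - q t) * (q' / q t))" unfolding g by (rule aux_c)
    then have "Im (q' * gfun (q t)) = - (Re (Ln (1 - q t)) * Im (q' / q t) + Im (Ln (1 - q t)) * Re (q' / q t))"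
      using aux_im[of "Ln (1 - q t)" "q' / q t"] by (simp only:)
    then show ?thesis by (simp only: Re_Ln[OF nz1])
  qed
  ultimately show ?thesis by (simp only: aux_r1)
qed

lemma Dfun_path:
  assumes q: "(q has_vector_derivative q') (at t)" and nz: "q t \<noteq> 0" "q t \<noteq> 1"
  shows "((\<lambda>s. Dfun (q s)) has_real_derivative
           (ln (cmod (q t)) * Im (- q' / (1 - q t)) - ln (cmod (1 - q t)) * Im (q' / q t))) (at t)"
proof (cases "q t \<in> slit")
  case True
  have ev: "eventually (\<lambda>s. q s \<in> slit) (at t)" by (rule eventually_in_open_path[OF q open_slit True])
  show ?thesis
    by (rule real_deriv_transform_ev[OF D0_path[OF q True nz(1)]])
       (use ev True in \<open>auto elim!: eventually_mono simp: Dfun1\<close>)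
next
  case False
  then have sl: "1 - q t \<in> slit" using nz by (auto simp: slit_iff)
  have q1: "((\<lambda>s. 1 - q s) has_vector_derivative 0 - q') (at t)"
    by (intro has_vector_derivative_diff q has_vector_derivative_const)
  have nz1: "1 - q t \<noteq> 0" using nz by simp
  note d = D0_path[OF q1 sl nz1]
  have d2: "((\<lambda>s. c0 - D0 (1 - q s)) has_real_derivative
     0 - (ln (cmod (1 - q t)) * Im (- (0 - q') / (1 - (1 - q t))) - ln (cmod (1 - (1 - q t))) * Im ((0 - q') / (1 - q t)))) (at t)"
    by (rule DERIV_diff[OF DERIV_const d])
  have ev: "eventually (\<lambda>s. 1 - q s \<in> slit) (at t)"
    by (rule eventually_in_open_path[OF q1 _ sl]) (intro open_slit)
  have d3: "((\<lambda>s. Dfun (q s)) has_real_derivative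
     0 - (ln (cmod (1 - q t)) * Im (- (0 - q') / (1 - (1 - q t))) - ln (cmod (1 - (1 - q t))) * Im ((0 - q') / (1 - q t)))) (at t)"
    by (rule real_deriv_transform_ev[OF d2]) (use ev sl in \<open>auto elim!: eventually_mono simp: Dfun2\<close>)
  have e: "1 - (1 - q t) = q t" "- (0 - q') = q'" "0 - q' = - q'" by simp_all
  show ?thesis using d3 unfolding e minus_minus by (simp only: aux_r2)
qed

lemma D0_cont: assumes "z \<in> slit" "z \<noteq> 0" shows "isCont D0 z"
proof -
  have "isCont Li z" using Li_deriv[OF assms(1)] DERIV_isCont by blast
  moreover have "isCont (\<lambda>w. Ln (1 - w)) z"
    using assms(1) by (intro continuous_intros isCont_Ln') (auto simp: slit_def)
  ultimately show ?thesis unfolding D0_def using assms(2)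
    by (intro continuous_intros) auto
qed

lemma Dfun_cont: assumes "z \<noteq> 0" "z \<noteq> 1" shows "isCont Dfun z"
proof (cases "z \<in> slit")
  case True
  have "eventually (\<lambda>w. w \<in> slit) (nhds z)" using open_slit True eventually_nhds_in_open by blast
  then have "eventually (\<lambda>w. D0 w = Dfun w) (nhds z)" by (auto elim!: eventually_mono simp: Dfun1)
  then show ?thesis using D0_cont[OF True assms(1)] isCont_cong by blast
next
  case False
  then have sl: "1 - z \<in> slit" using assms by (auto simp: slit_iff)
  have "open ((\<lambda>w. 1 - w) -` slit)" by (intro open_vimage open_slit continuous_intros)
  then have "eventually (\<lambda>w. 1 - w \<in> slit) (nhds z)" using sl eventually_nhds_in_open by force
  then have "eventually (\<lambda>w. c0 - D0 (1 - w) = Dfun w) (nhds z)" by (auto elim!: eventually_mono simp: Dfun2)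
  moreover have "isCont (\<lambda>w. c0 - D0 (1 - w)) z"
    using D0_cont[OF sl] assms by (intro continuous_intros continuous_at_compose[unfolded o_def, where f="\<lambda>w. 1 - w" and g=D0]) auto
  ultimately show ?thesis using isCont_cong[of "\<lambda>w. c0 - D0 (1 - w)" Dfun z] by blast
qed


definition lin :: "complex \<Rightarrow> complex \<Rightarrow> complex \<Rightarrow> complex \<times> complex \<Rightarrow> complex" where
  "lin a b c p = a + b * fst p + c * snd p"
definition dl :: "complex \<Rightarrow> complex \<Rightarrow> complex \<times> complex \<Rightarrow> complex" where
  "dl b c v = b * fst v + c * snd v"
definition LL :: "complex \<times> complex \<Rightarrow> complex \<Rightarrow> complex \<Rightarrow> complex \<Rightarrow> real" where
  "LL p a b c = ln (cmod (lin a b c p))"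
definition DD :: "complex \<times> complex \<Rightarrow> complex \<times> complex \<Rightarrow> complex \<Rightarrow> complex \<Rightarrow> complex \<Rightarrow> real" where
  "DD p v a b c = Im (dl b c v / lin a b c p)"

lemma lin_deriv:
  assumes "(\<gamma> has_vector_derivative v) (at t)"
  shows "((\<lambda>s. lin a b c (\<gamma> s)) has_vector_derivative dl b c v) (at t)"
proof -
  have f: "((\<lambda>s. fst (\<gamma> s)) has_vector_derivative fst v) (at t)"
    by (rule bounded_linear.has_vector_derivative[OF bounded_linear_fst assms])
  have s: "((\<lambda>s. snd (\<gamma> s)) has_vector_derivative snd v) (at t)"
    by (rule bounded_linear.has_vector_derivative[OF bounded_linear_snd assms])
  show ?thesis unfolding lin_def dl_def
    by (rule has_vector_derivative_add[OF has_vector_derivative_add[OF has_vector_derivative_const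
          has_vector_derivative_mult_right[OF f]] has_vector_derivative_mult_right[OF s], simplified])
qed

lemma quot_deriv:
  fixes F G :: "real \<Rightarrow> complex"
  assumes "(F has_vector_derivative F') (at t)" "(G has_vector_derivative G') (at t)" "G t \<noteq> 0"
  shows "((\<lambda>s. a * F s / G s) has_vector_derivative a * (F' * G t - F t * G') / (G t)^2) (at t)"
proof -
  have "((\<lambda>s. inverse (G s)) has_vector_derivative G' * (- (inverse (G t) * inverse (G t)))) (at t)"
  proof -
    have "(inverse has_field_derivative - (inverse (G t) * inverse (G t))) (at (G t))"
      using DERIV_inverse[OF assms(3)] by (simp add: power2_eq_square)
    from field_vector_diff_chain_at[OF assms(2) this]
    show ?thesis by (simp add: o_def)
  qed
  then have "((\<lambda>s. (a * F s) * inverse (G s)) has_vector_derivative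
      (a * F t) * (G' * (- (inverse (G t) * inverse (G t)))) + (a * F') * inverse (G t)) (at t)"
    using has_vector_derivative_mult[OF has_vector_derivative_mult_right[OF assms(1)]] by blast
  moreover have "(a * F t) * (G' * (- (inverse (G t) * inverse (G t)))) + (a * F') * inverse (G t)
     = a * (F' * G t - F t * G') / (G t)^2"
    using assms(3) by (simp add: field_simps power2_eq_square)
  ultimately show ?thesis by (simp add: divide_inverse)
qed

lemma alg_omega:
  fixes al be A B C dA dB dC :: complex
  assumes r: "C = al * A + be * B" "dC = al * dA + be * dB"
    and nz: "al \<noteq> 0" "be \<noteq> 0" "A \<noteq> 0" "B \<noteq> 0" "C \<noteq> 0"
  shows "1 - al * A / C = be * B / C"
    "(al * (dA * C - A * dC) / C^2) / (al * A / C) = dA / A - dC / C"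
    "- (al * (dA * C - A * dC) / C^2) / (1 - al * A / C) = dB / B - dC / C"
proof -
  show e: "1 - al * A / C = be * B / C" using nz r by (simp add: field_simps)
  show "(al * (dA * C - A * dC) / C^2) / (al * A / C) = dA / A - dC / C"
    using nz by (simp add: field_simps power2_eq_square)
  show "- (al * (dA * C - A * dC) / C^2) / (1 - al * A / C) = dB / B - dC / C"
  proof -
    have key: "-(al*(dA*C - A*dC)) = be*(dB*C - B*dC)" unfolding r by (simp add: algebra_simps)
    have "- (al * (dA * C - A * dC) / C^2) / (1 - al * A / C) = (-(al*(dA*C - A*dC)))/(be*B*C)"
      unfolding e using nz by (simp add: field_simps power2_eq_square)
    also have "\<dots> = (be*(dB*C - B*dC))/(be*B*C)" by (simp only: key)
    also have "\<dots> = dB / B - dC / C" using nz by (simp add: field_simps)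
    finally show ?thesis .
  qed
qed

lemma ln_cmod_quot:
  fixes al A C :: complex
  assumes "al \<noteq> 0" "A \<noteq> 0" "C \<noteq> 0"
  shows "ln (cmod (al * A / C)) = ln (cmod al) + ln (cmod A) - ln (cmod C)"
  using assms by (simp add: norm_mult norm_divide ln_mult ln_div)

lemma curve_eq: "(x, y) \<in> E_aff \<Longrightarrow> y^2 + y = x^3 - x"
  by (simp add: E_aff_def)

lemma rat_pt: "(x, y) \<in> E_aff \<Longrightarrow> x \<in> \<rat> \<Longrightarrow> y \<in> \<rat> \<Longrightarrow> (x, y) \<in> E_rat"
  by (simp add: E_rat_def)

lemma nzL1: assumes "p \<in> E_aff" "p \<notin> E_rat" shows "lin 0 1 0 p \<noteq> 0"
proof
  obtain x y where p: "p = (x, y)" by force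
  have c: "y^2 + y = x^3 - x" using assms(1) p curve_eq by simp
  assume "lin 0 1 0 p = 0"
  then have x: "x = 0" by (simp add: lin_def p)
  then have "y * (y + 1) = 0" using c by (simp add: power2_eq_square algebra_simps)
  then have "y = 0 \<or> y = -1" by (simp add: eq_neg_iff_add_eq_0)
  then have "(x, y) \<in> E_rat" using x rat_pt assms(1) p by auto
  then show False using assms p by simp
qed

lemma nzL2: assumes "p \<in> E_aff" "p \<notin> E_rat" shows "lin (-1) 1 0 p \<noteq> 0"
proof
  obtain x y where p: "p = (x, y)" by force
  have c: "y^2 + y = x^3 - x" using assms(1) p curve_eq by simp
  assume "lin (-1) 1 0 p = 0"
  then have x: "x = 1" by (simp add: lin_def p)
  then have "y * (y + 1) = 0" using c by (simp add: power2_eq_square algebra_simps)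
  then have "y = 0 \<or> y = -1" by (simp add: eq_neg_iff_add_eq_0)
  then have "(x, y) \<in> E_rat" using x rat_pt assms(1) p by auto
  then show False using assms p by simp
qed

lemma nzL3: assumes "p \<in> E_aff" "p \<notin> E_rat" shows "lin 1 1 0 p \<noteq> 0"
proof
  obtain x y where p: "p = (x, y)" by force
  have c: "y^2 + y = x^3 - x" using assms(1) p curve_eq by simp
  assume "lin 1 1 0 p = 0"
  then have x: "x = -1" by (simp add: lin_def p add_eq_0_iff)
  then have "y * (y + 1) = 0" using c by (simp add: power2_eq_square algebra_simps)
  then have "y = 0 \<or> y = -1" by (simp add: eq_neg_iff_add_eq_0)
  then have "(x, y) \<in> E_rat" using x rat_pt assms(1) p by auto
  then show False using assms p by simp
qed

lemma nzL4: assumes "p \<in> E_aff" "p \<notin> E_rat" shows "lin (-2) 1 0 p \<noteq> 0"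
proof
  obtain x y where p: "p = (x, y)" by force
  have c: "y^2 + y = x^3 - x" using assms(1) p curve_eq by simp
  assume "lin (-2) 1 0 p = 0"
  then have x: "x = 2" by (simp add: lin_def p)
  then have "(y - 2) * (y + 3) = 0" using c by (simp add: power2_eq_square algebra_simps)
  then have "y = 2 \<or> y = -3" by (simp add: eq_neg_iff_add_eq_0)
  then have "(x, y) \<in> E_rat" using x rat_pt assms(1) p by auto
  then show False using assms p by simp
qed

lemma nzL5: assumes "p \<in> E_aff" "p \<notin> E_rat" shows "lin 0 0 1 p \<noteq> 0"
proof
  obtain x y where p: "p = (x, y)" by force
  have c: "y^2 + y = x^3 - x" using assms(1) p curve_eq by simp
  assume "lin 0 0 1 p = 0"
  then have y: "y = 0" by (simp add: lin_def p)
  then have "x * (x - 1) * (x + 1) = 0" using c by (simp add: power3_eq_cube algebra_simps)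
  then have "x = 0 \<or> x = 1 \<or> x = -1" by (simp add: eq_neg_iff_add_eq_0)
  then have "(x, y) \<in> E_rat" using y rat_pt assms(1) p by auto
  then show False using assms p by simp
qed

lemma nzL6: assumes "p \<in> E_aff" "p \<notin> E_rat" shows "lin 0 1 1 p \<noteq> 0"
proof
  obtain x y where p: "p = (x, y)" by force
  have c: "y^2 + y = x^3 - x" using assms(1) p curve_eq by simp
  assume "lin 0 1 1 p = 0"
  then have y: "y = - x" by (simp add: lin_def p add_eq_0_iff)
  then have "x * x * (x - 1) = 0" using c by (simp add: power2_eq_square power3_eq_cube algebra_simps)
  then have "x = 0 \<or> x = 1" by simp
  then have "(x, y) \<in> E_rat" using y rat_pt assms(1) p by auto
  then show False using assms p by simp
qed

lemma nzL7: assumes "p \<in> E_aff" "p \<notin> E_rat" shows "lin (-1) 2 1 p \<noteq> 0"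
proof
  obtain x y where p: "p = (x, y)" by force
  have c: "y^2 + y = x^3 - x" using assms(1) p curve_eq by simp
  assume "lin (-1) 2 1 p = 0"
  then have y: "y = 1 - 2 * x" by (simp add: lin_def p algebra_simps add_eq_0_iff)
  have "(x - 1) * (x - 1) * (x - 2) = (x^3 - x) - ((1 - 2 * x)^2 + (1 - 2 * x))"
    by (simp add: power2_eq_square power3_eq_cube algebra_simps)
  also have "\<dots> = 0" using c unfolding y by (metis diff_self)
  finally have "(x - 1) * (x - 1) * (x - 2) = 0" .
  then have "x = 1 \<or> x = 2" by auto
  then have "(x, y) \<in> E_rat" using y rat_pt assms(1) p by auto
  then show False using assms p by simp
qed

lemma relN1: assumes "p \<in> E_aff"
  shows "lin 1 0 1 p * lin 0 0 1 p = lin 0 1 0 p * lin (-1) 1 0 p * lin 1 1 0 p"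
proof -
  obtain x y where p: "p = (x, y)" by force
  have c: "y^2 + y = x^3 - x" using assms p curve_eq by simp
  have "lin 1 0 1 p * lin 0 0 1 p = y^2 + y" by (simp add: lin_def p power2_eq_square algebra_simps)
  also have "\<dots> = x^3 - x" by (rule c)
  also have "\<dots> = lin 0 1 0 p * lin (-1) 1 0 p * lin 1 1 0 p" by (simp add: lin_def p power3_eq_cube algebra_simps)
  finally show ?thesis .
qed

lemma relN2: assumes "p \<in> E_aff"
  shows "lin 1 (-1) 1 p * lin 0 1 1 p = lin 0 1 0 p * lin 0 1 0 p * lin (-1) 1 0 p"
proof -
  obtain x y where p: "p = (x, y)" by force
  have c: "y^2 + y = x^3 - x" using assms p curve_eq by simp
  have "lin 1 (-1) 1 p * lin 0 1 1 p = (y^2 + y) - x^2 + x" by (simp add: lin_def p power2_eq_square algebra_simps)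
  also have "\<dots> = (x^3 - x) - x^2 + x" by (simp only: c)
  also have "\<dots> = lin 0 1 0 p * lin 0 1 0 p * lin (-1) 1 0 p" by (simp add: lin_def p power2_eq_square power3_eq_cube algebra_simps)
  finally show ?thesis .
qed

lemma relN3: assumes "p \<in> E_aff"
  shows "lin 2 (-2) 1 p * lin (-1) 2 1 p = lin (-1) 1 0 p * lin (-1) 1 0 p * lin (-2) 1 0 p"
proof -
  obtain x y where p: "p = (x, y)" by force
  have c: "y^2 + y = x^3 - x" using assms p curve_eq by simp
  have "lin 2 (-2) 1 p * lin (-1) 2 1 p = (y^2 + y) - 4 * x^2 + 6 * x - 2" by (simp add: lin_def p power2_eq_square algebra_simps)
  also have "\<dots> = (x^3 - x) - 4 * x^2 + 6 * x - 2" by (simp only: c)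
  also have "\<dots> = lin (-1) 1 0 p * lin (-1) 1 0 p * lin (-2) 1 0 p" by (simp add: lin_def p power2_eq_square power3_eq_cube algebra_simps)
  finally show ?thesis .
qed

lemma relN4: assumes "p \<in> E_aff"
  shows "lin 1 1 1 p * lin (-1) 1 0 p * lin 0 1 1 p = lin 0 1 0 p * lin 0 0 1 p * lin (-1) 2 1 p"
proof -
  obtain x y where p: "p = (x, y)" by force
  have c: "y^2 + y = x^3 - x" using assms p curve_eq by simp
  have "lin 1 1 1 p * lin (-1) 1 0 p * lin 0 1 1 p = (x - 1) * (y^2 + y) + (x - 1) * (x^2 + x + 2 * x * y)"
    by (simp add: lin_def p power2_eq_square algebra_simps)
  also have "\<dots> = (x - 1) * (x^3 - x) + (x - 1) * (x^2 + x + 2 * x * y)" by (simp only: c)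
  also have "\<dots> = x * (x^3 - x) + 2 * x^2 * y - 2 * x * y" by (simp add: power2_eq_square power3_eq_cube algebra_simps)
  also have "\<dots> = x * (y^2 + y) + 2 * x^2 * y - 2 * x * y" by (simp only: c)
  also have "\<dots> = lin 0 1 0 p * lin 0 0 1 p * lin (-1) 2 1 p" by (simp add: lin_def p power2_eq_square algebra_simps)
  finally show ?thesis .
qed

definition Tg :: "complex \<times> complex \<Rightarrow> complex \<times> complex \<Rightarrow> complex" where
  "Tg p v = (2 * snd p + 1) * snd v - (3 * (fst p)^2 - 1) * fst v"

lemma dN1: "dl 0 1 v * lin 0 0 1 p + lin 1 0 1 p * dl 0 1 v
  - (dl 1 0 v * lin (-1) 1 0 p * lin 1 1 0 p + lin 0 1 0 p * dl 1 0 v * lin 1 1 0 p + lin 0 1 0 p * lin (-1) 1 0 p * dl 1 0 v)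
  = Tg p v"
  by (simp add: lin_def dl_def Tg_def power2_eq_square algebra_simps)

lemma dN2: "dl (-1) 1 v * lin 0 1 1 p + lin 1 (-1) 1 p * dl 1 1 v
  - (dl 1 0 v * lin 0 1 0 p * lin (-1) 1 0 p + lin 0 1 0 p * dl 1 0 v * lin (-1) 1 0 p + lin 0 1 0 p * lin 0 1 0 p * dl 1 0 v)
  = Tg p v"
  by (simp add: lin_def dl_def Tg_def power2_eq_square algebra_simps)

lemma dN3: "dl (-2) 1 v * lin (-1) 2 1 p + lin 2 (-2) 1 p * dl 2 1 v
  - (dl 1 0 v * lin (-1) 1 0 p * lin (-2) 1 0 p + lin (-1) 1 0 p * dl 1 0 v * lin (-2) 1 0 p + lin (-1) 1 0 p * lin (-1) 1 0 p * dl 1 0 v)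
  = Tg p v"
  by (simp add: lin_def dl_def Tg_def power2_eq_square algebra_simps)

lemma dN4: "dl 1 1 v * lin (-1) 1 0 p * lin 0 1 1 p + lin 1 1 1 p * dl 1 0 v * lin 0 1 1 p + lin 1 1 1 p * lin (-1) 1 0 p * dl 1 1 v
  - (dl 1 0 v * lin 0 0 1 p * lin (-1) 2 1 p + lin 0 1 0 p * dl 0 1 v * lin (-1) 2 1 p + lin 0 1 0 p * lin 0 0 1 p * dl 2 1 v)
  = - Tg p v"
  by (simp add: lin_def dl_def Tg_def power2_eq_square algebra_simps)

lemma logder23:
  fixes a b c d e a' b' c' d' e' :: complex
  assumes "a * b = c * d * e" "a' * b + a * b' - (c' * d * e + c * d' * e + c * d * e') = 0"
    and "a \<noteq> 0" "b \<noteq> 0" "c \<noteq> 0" "d \<noteq> 0" "e \<noteq> 0"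
  shows "a' / a + b' / b = c' / c + d' / d + e' / e"
proof -
  have "a' / a + b' / b = (a' * b + a * b') / (a * b)" using assms by (simp add: field_simps)
  also have "\<dots> = (c' * d * e + c * d' * e + c * d * e') / (c * d * e)"
    using assms(1,2) by (simp add: right_minus_eq)
  also have "\<dots> = c' / c + d' / d + e' / e" using assms by (simp add: field_simps)
  finally show ?thesis .
qed

lemma logder33:
  fixes a b c d e f a' b' c' d' e' f' :: complex
  assumes "a * b * c = d * e * f" "a' * b * c + a * b' * c + a * b * c' - (d' * e * f + d * e' * f + d * e * f') = 0"
    and "a \<noteq> 0" "b \<noteq> 0" "c \<noteq> 0" "d \<noteq> 0" "e \<noteq> 0" "f \<noteq> 0"
  shows "a' / a + b' / b + c' / c = d' / d + e' / e + f' / f"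
proof -
  have "a' / a + b' / b + c' / c = (a' * b * c + a * b' * c + a * b * c') / (a * b * c)" using assms by (simp add: field_simps)
  also have "\<dots> = (d' * e * f + d * e' * f + d * e * f') / (d * e * f)"
    using assms(1,2) by (simp add: right_minus_eq)
  also have "\<dots> = d' / d + e' / e + f' / f" using assms by (simp add: field_simps)
  finally show ?thesis .
qed

lemma ln3: fixes c d e :: complex assumes "c \<noteq> 0" "d \<noteq> 0" "e \<noteq> 0"
  shows "ln (cmod (c * d * e)) = ln (cmod c) + ln (cmod d) + ln (cmod e)"
proof -
  have p: "cmod c > 0" "cmod d > 0" "cmod e > 0" using assms by auto
  have "ln (cmod (c * d * e)) = ln (cmod c * cmod d * cmod e)" by (simp add: norm_mult)
  also have "\<dots> = ln (cmod c * cmod d) + ln (cmod e)" using p by (intro ln_mult_pos) auto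
  also have "\<dots> = ln (cmod c) + ln (cmod d) + ln (cmod e)" using p by (simp add: ln_mult_pos)
  finally show ?thesis .
qed

lemma ln2: fixes c d :: complex assumes "c \<noteq> 0" "d \<noteq> 0"
  shows "ln (cmod (c * d)) = ln (cmod c) + ln (cmod d)"
proof -
  have p: "cmod c > 0" "cmod d > 0" using assms by auto
  have "ln (cmod (c * d)) = ln (cmod c * cmod d)" by (simp add: norm_mult)
  also have "\<dots> = ln (cmod c) + ln (cmod d)" using p by (intro ln_mult_pos) auto
  finally show ?thesis .
qed

lemma lnrel23:
  fixes a b c d e :: complex
  assumes "a * b = c * d * e" "a \<noteq> 0" "b \<noteq> 0" "c \<noteq> 0" "d \<noteq> 0" "e \<noteq> 0"
  shows "ln (cmod a) + ln (cmod b) = ln (cmod c) + ln (cmod d) + ln (cmod e)"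
proof -
  have "ln (cmod a) + ln (cmod b) = ln (cmod (a * b))" using ln2[OF assms(2,3)] by simp
  also have "\<dots> = ln (cmod (c * d * e))" using assms(1) by simp
  also have "\<dots> = ln (cmod c) + ln (cmod d) + ln (cmod e)" using ln3[OF assms(4,5,6)] by simp
  finally show ?thesis .
qed

lemma lnrel33:
  fixes a b c d e f :: complex
  assumes "a * b * c = d * e * f" "a \<noteq> 0" "b \<noteq> 0" "c \<noteq> 0" "d \<noteq> 0" "e \<noteq> 0" "f \<noteq> 0"
  shows "ln (cmod a) + ln (cmod b) + ln (cmod c) = ln (cmod d) + ln (cmod e) + ln (cmod f)"
proof -
  have "ln (cmod a) + ln (cmod b) + ln (cmod c) = ln (cmod (a * b * c))" using ln3[OF assms(2,3,4)] by simp
  also have "\<dots> = ln (cmod (d * e * f))" using assms(1) by simp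
  also have "\<dots> = ln (cmod d) + ln (cmod e) + ln (cmod f)" using ln3[OF assms(5,6,7)] by simp
  finally show ?thesis .
qed

lemma tangent:
  assumes g: "(\<gamma> has_vector_derivative v) (at t)" and t: "t \<in> {0<..<1}"
    and on: "\<And>s. s \<in> {0..1} \<Longrightarrow> \<gamma> s \<in> E_aff"
  shows "Tg (\<gamma> t) v = 0"
proof -
  have f: "((\<lambda>s. fst (\<gamma> s)) has_vector_derivative fst v) (at t)"
    by (rule bounded_linear.has_vector_derivative[OF bounded_linear_fst g])
  have s: "((\<lambda>s. snd (\<gamma> s)) has_vector_derivative snd v) (at t)"
    by (rule bounded_linear.has_vector_derivative[OF bounded_linear_snd g])
  let ?c = "\<lambda>s. snd (\<gamma> s) * snd (\<gamma> s) + snd (\<gamma> s) - fst (\<gamma> s) * fst (\<gamma> s) * fst (\<gamma> s) + fst (\<gamma> s)"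
  have d: "(?c has_vector_derivative
     ((snd (\<gamma> t) * snd v + snd v * snd (\<gamma> t)) + snd v
      - (fst (\<gamma> t) * fst (\<gamma> t) * fst v + (fst (\<gamma> t) * fst v + fst v * fst (\<gamma> t)) * fst (\<gamma> t)) + fst v)) (at t)"
    by (intro has_vector_derivative_add has_vector_derivative_diff has_vector_derivative_mult f s)
  have z: "?c s = 0" if "s \<in> {0<..<1}" for s
  proof -
    have "\<gamma> s \<in> E_aff" using on that by auto
    then have "(snd (\<gamma> s))^2 + snd (\<gamma> s) = (fst (\<gamma> s))^3 - fst (\<gamma> s)"
      using curve_eq[of "fst (\<gamma> s)" "snd (\<gamma> s)"] by simp
    then show ?thesis by (simp add: power2_eq_square power3_eq_cube algebra_simps)
  qed
  have d0: "((\<lambda>s. 0) has_vector_derivative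
     ((snd (\<gamma> t) * snd v + snd v * snd (\<gamma> t)) + snd v
      - (fst (\<gamma> t) * fst (\<gamma> t) * fst v + (fst (\<gamma> t) * fst v + fst v * fst (\<gamma> t)) * fst (\<gamma> t)) + fst v)) (at t)"
    by (rule has_vector_derivative_transform_within_open[OF d open_greaterThanLessThan t]) (use z in auto)
  have "((snd (\<gamma> t) * snd v + snd v * snd (\<gamma> t)) + snd v
      - (fst (\<gamma> t) * fst (\<gamma> t) * fst v + (fst (\<gamma> t) * fst v + fst v * fst (\<gamma> t)) * fst (\<gamma> t)) + fst v) = 0"
    using vector_derivative_unique_at[OF d0 has_vector_derivative_const] .
  then show ?thesis by (simp add: Tg_def power2_eq_square algebra_simps)
qed

definition Om :: "complex \<times> complex \<Rightarrow> complex \<times> complex \<Rightarrow> complex \<Rightarrow> complex \<Rightarrow>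
   complex \<Rightarrow> complex \<Rightarrow> complex \<Rightarrow> complex \<Rightarrow> complex \<Rightarrow> complex \<Rightarrow> complex \<Rightarrow> complex \<Rightarrow> complex \<Rightarrow> real" where
  "Om p v al be a0 a1 a2 b0 b1 b2 e0 e1 e2 =
     (ln (cmod al) + LL p a0 a1 a2 - LL p e0 e1 e2) * (DD p v b0 b1 b2 - DD p v e0 e1 e2)
   - (ln (cmod be) + LL p b0 b1 b2 - LL p e0 e1 e2) * (DD p v a0 a1 a2 - DD p v e0 e1 e2)"

definition W :: "complex \<Rightarrow> complex \<Rightarrow> complex \<Rightarrow> complex \<Rightarrow> complex \<Rightarrow> complex \<Rightarrow> complex \<Rightarrow> complex \<times> complex \<Rightarrow> real" where
  "W al a0 a1 a2 e0 e1 e2 p = Dfun (al * lin a0 a1 a2 p / lin e0 e1 e2 p)"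

lemma omega_lin:
  assumes g: "(\<gamma> has_vector_derivative v) (at t)"
    and rel: "al * a0 + be * b0 = e0" "al * a1 + be * b1 = e1" "al * a2 + be * b2 = e2"
    and nz: "al \<noteq> 0" "be \<noteq> 0" "lin a0 a1 a2 (\<gamma> t) \<noteq> 0" "lin b0 b1 b2 (\<gamma> t) \<noteq> 0" "lin e0 e1 e2 (\<gamma> t) \<noteq> 0"
  shows "((\<lambda>s. W al a0 a1 a2 e0 e1 e2 (\<gamma> s)) has_real_derivative Om (\<gamma> t) v al be a0 a1 a2 b0 b1 b2 e0 e1 e2) (at t)"
proof -
  define A where "A = lin a0 a1 a2 (\<gamma> t)"
  define B where "B = lin b0 b1 b2 (\<gamma> t)"
  define C where "C = lin e0 e1 e2 (\<gamma> t)"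
  define dA where "dA = dl a1 a2 v"
  define dB where "dB = dl b1 b2 v"
  define dC where "dC = dl e1 e2 v"
  have r1: "C = al * A + be * B" unfolding A_def B_def C_def lin_def rel[symmetric]
    by (simp add: algebra_simps)
  have r2: "dC = al * dA + be * dB" unfolding dA_def dB_def dC_def dl_def rel[symmetric]
    by (simp add: algebra_simps)
  have nzA: "A \<noteq> 0" and nzB: "B \<noteq> 0" and nzC: "C \<noteq> 0" using nz by (simp_all add: A_def B_def C_def)
  note al = alg_omega[OF r1 r2 nz(1,2) nzA nzB nzC]
  have q: "((\<lambda>s. al * lin a0 a1 a2 (\<gamma> s) / lin e0 e1 e2 (\<gamma> s)) has_vector_derivative
      al * (dA * C - A * dC) / C^2) (at t)"
    unfolding A_def C_def dA_def dC_def
    by (rule quot_deriv[OF lin_deriv[OF g] lin_deriv[OF g] nz(5)])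
  have q0: "al * A / C \<noteq> 0" using nz nzA nzC by simp
  have q1: "al * A / C \<noteq> 1"
  proof
    assume "al * A / C = 1"
    then have "be * B / C = 0" using al(1) by simp
    then show False using nz nzB nzC by simp
  qed
  note d = Dfun_path[of "\<lambda>s. al * lin a0 a1 a2 (\<gamma> s) / lin e0 e1 e2 (\<gamma> s)" "al * (dA * C - A * dC) / C^2" t,
      OF q, unfolded A_def[symmetric] C_def[symmetric], OF q0 q1]
  have e: "ln (cmod (al * A / C)) * Im (- (al * (dA * C - A * dC) / C^2) / (1 - al * A / C))
      - ln (cmod (1 - al * A / C)) * Im ((al * (dA * C - A * dC) / C^2) / (al * A / C))
      = Om (\<gamma> t) v al be a0 a1 a2 b0 b1 b2 e0 e1 e2"
    unfolding Om_def LL_def DD_def A_def[symmetric] B_def[symmetric] C_def[symmetric]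
      dA_def[symmetric] dB_def[symmetric] dC_def[symmetric] unfolding al(3) al(2) unfolding al(1)
      ln_cmod_quot[OF nz(1) nzA nzC] ln_cmod_quot[OF nz(2) nzB nzC] minus_complex.sel ..
  show ?thesis unfolding W_def using d unfolding e .
qed
definition PhiA :: "(real \<Rightarrow> complex \<times> complex) \<Rightarrow> real \<Rightarrow> real" where
  "PhiA g s = (-2) * W (-1) 0 0 1 1 0 0 (g s) + (-2) * W 1 1 0 1 0 1 1 (g s) + 3 * W (1/2) 1 1 0 1 0 0 (g s) + (-1) * W (-1/3) (-2) 1 0 1 0 0 (g s) + (-1) * W 1 1 1 1 1 0 0 (g s) + (-7) * W 1 1 1 0 1 0 0 (g s) + 1 * W 1 1 1 1 0 1 0 (g s) + (-3) * W (1/2) 1 1 0 0 1 0 (g s) + 1 * W (1/2) (-1) 2 1 (-1) 1 0 (g s) + (-3) * W 1 1 1 1 0 0 1 (g s) + 1 * W (2/3) (-2) 1 0 (-1) 1 0 (g s) + 1 * W (-1) 1 1 1 1 (-1) 1 (g s)"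

definition OmA :: "complex \<times> complex \<Rightarrow> complex \<times> complex \<Rightarrow> real" where
  "OmA p v = (-2) * Om (p) v (-1) 1 0 0 1 1 0 1 1 0 0 + (-2) * Om (p) v 1 1 1 0 1 (-1) 1 0 0 1 1 + 3 * Om (p) v (1/2) (-1/2) 1 1 0 (-1) 1 0 1 0 0 + (-1) * Om (p) v (-1/3) (1/3) (-2) 1 0 1 1 0 1 0 0 + (-1) * Om (p) v 1 (-1) 1 1 1 0 1 1 1 0 0 + (-7) * Om (p) v 1 (-1) 1 1 0 0 1 0 1 0 0 + 1 * Om (p) v 1 (-1) 1 1 1 1 0 1 0 1 0 + (-3) * Om (p) v (1/2) (1/2) 1 1 0 (-1) 1 0 0 1 0 + 1 * Om (p) v (1/2) (-1/2) (-1) 2 1 1 0 1 (-1) 1 0 + (-3) * Om (p) v 1 (-1) 1 1 1 1 1 0 0 0 1 + 1 * Om (p) v (2/3) (1/3) (-2) 1 0 1 1 0 (-1) 1 0 + 1 * Om (p) v (-1) 2 1 1 1 1 0 1 1 (-1) 1"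

definition PhiB :: "(real \<Rightarrow> complex \<times> complex) \<Rightarrow> real \<Rightarrow> real" where
  "PhiB g s = (-1) * W (-1) 0 0 1 1 0 0 (g s) + (-2) * W 1 1 0 1 0 1 1 (g s) + 2 * W (1/2) 1 1 0 1 0 0 (g s) + (-1) * W 1 1 1 1 1 0 0 (g s) + (-4) * W 1 1 1 0 1 0 0 (g s) + (-1) * W (1/2) 1 1 0 0 1 0 (g s) + 1 * W (1/2) (-1) 2 1 (-1) 1 0 (g s) + (-2) * W 1 1 1 1 0 0 1 (g s) + 1 * W (-1) 1 1 1 1 (-1) 1 (g s)"

definition OmB :: "complex \<times> complex \<Rightarrow> complex \<times> complex \<Rightarrow> real" where
  "OmB p v = (-1) * Om (p) v (-1) 1 0 0 1 1 0 1 1 0 0 + (-2) * Om (p) v 1 1 1 0 1 (-1) 1 0 0 1 1 + 2 * Om (p) v (1/2) (-1/2) 1 1 0 (-1) 1 0 1 0 0 + (-1) * Om (p) v 1 (-1) 1 1 1 0 1 1 1 0 0 + (-4) * Om (p) v 1 (-1) 1 1 0 0 1 0 1 0 0 + (-1) * Om (p) v (1/2) (1/2) 1 1 0 (-1) 1 0 0 1 0 + 1 * Om (p) v (1/2) (-1/2) (-1) 2 1 1 0 1 (-1) 1 0 + (-2) * Om (p) v 1 (-1) 1 1 1 1 1 0 0 0 1 + 1 * Om (p) v (-1) 2 1 1 1 1 0 1 1 (-1) 1"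

lemma lnc: "ln (cmod (1::complex)) = 0" "ln (cmod (-1::complex)) = 0" "ln (cmod ((1::complex)/2)) = - ln 2"
  "ln (cmod ((-1::complex)/2)) = - ln 2" "ln (cmod ((-1::complex)/3)) = - ln 3" "ln (cmod ((1::complex)/3)) = - ln 3"
  "ln (cmod ((2::complex)/3)) = ln 2 - ln 3" "ln (cmod (2::complex)) = ln 2"
  by (simp_all add: norm_divide ln_div)

lemma LLDD_one: "LL p 1 0 0 = 0" "DD p v 1 0 0 = 0"
  by (simp_all add: LL_def DD_def lin_def dl_def)

lemma algA:
  assumes rl1: "LL p 1 0 1 = LL p 0 1 0 + LL p (-1) 1 0 + LL p 1 1 0 - LL p 0 0 1"
    and rl2: "LL p 1 (-1) 1 = 2 * LL p 0 1 0 + LL p (-1) 1 0 - LL p 0 1 1"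
    and rl3: "LL p 2 (-2) 1 = 2 * LL p (-1) 1 0 + LL p (-2) 1 0 - LL p (-1) 2 1"
    and rl4: "LL p 1 1 1 = LL p 0 1 0 + LL p 0 0 1 + LL p (-1) 2 1 - LL p (-1) 1 0 - LL p 0 1 1"
    and rd1: "DD p v 1 0 1 = DD p v 0 1 0 + DD p v (-1) 1 0 + DD p v 1 1 0 - DD p v 0 0 1"
    and rd2: "DD p v 1 (-1) 1 = 2 * DD p v 0 1 0 + DD p v (-1) 1 0 - DD p v 0 1 1"
    and rd3: "DD p v 2 (-2) 1 = 2 * DD p v (-1) 1 0 + DD p v (-2) 1 0 - DD p v (-1) 2 1"
    and rd4: "DD p v 1 1 1 = DD p v 0 1 0 + DD p v 0 0 1 + DD p v (-1) 2 1 - DD p v (-1) 1 0 - DD p v 0 1 1"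
  shows "OmA p v = (LL p (-1) 1 0 * DD p v 2 (-2) 1 - LL p 2 (-2) 1 * DD p v (-1) 1 0)
     + 7 * (LL p 0 1 0 * DD p v 0 0 1 - LL p 0 0 1 * DD p v 0 1 0)"
  unfolding OmA_def Om_def lnc LLDD_one rl1 rl2 rl3 rl4 rd1 rd2 rd3 rd4
  by (simp add: algebra_simps)

lemma algB:
  assumes rl1: "LL p 1 0 1 = LL p 0 1 0 + LL p (-1) 1 0 + LL p 1 1 0 - LL p 0 0 1"
    and rl2: "LL p 1 (-1) 1 = 2 * LL p 0 1 0 + LL p (-1) 1 0 - LL p 0 1 1"
    and rl3: "LL p 2 (-2) 1 = 2 * LL p (-1) 1 0 + LL p (-2) 1 0 - LL p (-1) 2 1"
    and rl4: "LL p 1 1 1 = LL p 0 1 0 + LL p 0 0 1 + LL p (-1) 2 1 - LL p (-1) 1 0 - LL p 0 1 1"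
    and rd1: "DD p v 1 0 1 = DD p v 0 1 0 + DD p v (-1) 1 0 + DD p v 1 1 0 - DD p v 0 0 1"
    and rd2: "DD p v 1 (-1) 1 = 2 * DD p v 0 1 0 + DD p v (-1) 1 0 - DD p v 0 1 1"
    and rd3: "DD p v 2 (-2) 1 = 2 * DD p v (-1) 1 0 + DD p v (-2) 1 0 - DD p v (-1) 2 1"
    and rd4: "DD p v 1 1 1 = DD p v 0 1 0 + DD p v 0 0 1 + DD p v (-1) 2 1 - DD p v (-1) 1 0 - DD p v 0 1 1"
  shows "OmB p v = (LL p (-1) 1 0 * DD p v 1 (-1) 1 - LL p 1 (-1) 1 * DD p v (-1) 1 0)
     + 5 * (LL p 0 1 0 * DD p v 0 0 1 - LL p 0 0 1 * DD p v 0 1 0)"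
  unfolding OmB_def Om_def lnc LLDD_one rl1 rl2 rl3 rl4 rd1 rd2 rd3 rd4
  by (simp add: algebra_simps)


lemma nz_all: assumes "p \<in> E_aff - E_rat"
  shows "lin 0 1 0 p \<noteq> 0" "lin (-1) 1 0 p \<noteq> 0" "lin 1 1 0 p \<noteq> 0" "lin (-2) 1 0 p \<noteq> 0"
    "lin 0 0 1 p \<noteq> 0" "lin 0 1 1 p \<noteq> 0" "lin (-1) 2 1 p \<noteq> 0"
    "lin 1 0 1 p \<noteq> 0" "lin 1 (-1) 1 p \<noteq> 0" "lin 2 (-2) 1 p \<noteq> 0" "lin 1 1 1 p \<noteq> 0" "lin 1 0 0 p \<noteq> 0"
proof -
  have a: "p \<in> E_aff" "p \<notin> E_rat" using assms by auto
  note b = nzL1[OF a] nzL2[OF a] nzL3[OF a] nzL4[OF a] nzL5[OF a] nzL6[OF a] nzL7[OF a]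
  show "lin 0 1 0 p \<noteq> 0" "lin (-1) 1 0 p \<noteq> 0" "lin 1 1 0 p \<noteq> 0" "lin (-2) 1 0 p \<noteq> 0"
    "lin 0 0 1 p \<noteq> 0" "lin 0 1 1 p \<noteq> 0" "lin (-1) 2 1 p \<noteq> 0" using b by auto
  show "lin 1 0 1 p \<noteq> 0" using relN1[OF a(1)] b by auto
  show "lin 1 (-1) 1 p \<noteq> 0" using relN2[OF a(1)] b by auto
  show "lin 2 (-2) 1 p \<noteq> 0" using relN3[OF a(1)] b by auto
  show "lin 1 1 1 p \<noteq> 0" using relN4[OF a(1)] b by auto
  show "lin 1 0 0 p \<noteq> 0" by (simp add: lin_def)
qed

lemma rels:
  assumes "p \<in> E_aff - E_rat" "Tg p v = 0"
  shows "LL p 1 0 1 = LL p 0 1 0 + LL p (-1) 1 0 + LL p 1 1 0 - LL p 0 0 1"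
    and "LL p 1 (-1) 1 = 2 * LL p 0 1 0 + LL p (-1) 1 0 - LL p 0 1 1"
    and "LL p 2 (-2) 1 = 2 * LL p (-1) 1 0 + LL p (-2) 1 0 - LL p (-1) 2 1"
    and "LL p 1 1 1 = LL p 0 1 0 + LL p 0 0 1 + LL p (-1) 2 1 - LL p (-1) 1 0 - LL p 0 1 1"
    and "DD p v 1 0 1 = DD p v 0 1 0 + DD p v (-1) 1 0 + DD p v 1 1 0 - DD p v 0 0 1"
    and "DD p v 1 (-1) 1 = 2 * DD p v 0 1 0 + DD p v (-1) 1 0 - DD p v 0 1 1"
    and "DD p v 2 (-2) 1 = 2 * DD p v (-1) 1 0 + DD p v (-2) 1 0 - DD p v (-1) 2 1"
    and "DD p v 1 1 1 = DD p v 0 1 0 + DD p v 0 0 1 + DD p v (-1) 2 1 - DD p v (-1) 1 0 - DD p v 0 1 1"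
proof -
  have a: "p \<in> E_aff" using assms by auto
  note nz = nz_all[OF assms(1)]
  note l1 = lnrel23[OF relN1[OF a] nz(8,5,1,2,3)]
  note l2 = lnrel23[OF relN2[OF a] nz(9,6,1,1,2)]
  note l3 = lnrel23[OF relN3[OF a] nz(10,7,2,2,4)]
  note l4 = lnrel33[OF relN4[OF a] nz(11,2,6,1,5,7)]
  note d1 = arg_cong[OF logder23[OF relN1[OF a] dN1[where p=p and v=v, unfolded assms(2)] nz(8,5,1,2,3)], of Im]
  note d2 = arg_cong[OF logder23[OF relN2[OF a] dN2[where p=p and v=v, unfolded assms(2)] nz(9,6,1,1,2)], of Im]
  note d3 = arg_cong[OF logder23[OF relN3[OF a] dN3[where p=p and v=v, unfolded assms(2)] nz(10,7,2,2,4)], of Im]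
  note d4 = arg_cong[OF logder33[OF relN4[OF a] dN4[where p=p and v=v, unfolded assms(2) minus_zero] nz(11,2,6,1,5,7)], of Im]
  show "LL p 1 0 1 = LL p 0 1 0 + LL p (-1) 1 0 + LL p 1 1 0 - LL p 0 0 1"
    using l1 unfolding LL_def by linarith
  show "LL p 1 (-1) 1 = 2 * LL p 0 1 0 + LL p (-1) 1 0 - LL p 0 1 1"
    using l2 unfolding LL_def by linarith
  show "LL p 2 (-2) 1 = 2 * LL p (-1) 1 0 + LL p (-2) 1 0 - LL p (-1) 2 1"
    using l3 unfolding LL_def by linarith
  show "LL p 1 1 1 = LL p 0 1 0 + LL p 0 0 1 + LL p (-1) 2 1 - LL p (-1) 1 0 - LL p 0 1 1"
    using l4 unfolding LL_def by linarith
  show "DD p v 1 0 1 = DD p v 0 1 0 + DD p v (-1) 1 0 + DD p v 1 1 0 - DD p v 0 0 1"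
    using d1 unfolding DD_def plus_complex.sel by linarith
  show "DD p v 1 (-1) 1 = 2 * DD p v 0 1 0 + DD p v (-1) 1 0 - DD p v 0 1 1"
    using d2 unfolding DD_def plus_complex.sel by linarith
  show "DD p v 2 (-2) 1 = 2 * DD p v (-1) 1 0 + DD p v (-2) 1 0 - DD p v (-1) 2 1"
    using d3 unfolding DD_def plus_complex.sel by linarith
  show "DD p v 1 1 1 = DD p v 0 1 0 + DD p v 0 0 1 + DD p v (-1) 2 1 - DD p v (-1) 1 0 - DD p v 0 1 1"
    using d4 unfolding DD_def plus_complex.sel by linarith
qed

lemma lin_rel:
  assumes "al * a0 + be * b0 = e0" "al * a1 + be * b1 = e1" "al * a2 + be * b2 = e2"
  shows "lin e0 e1 e2 p = al * lin a0 a1 a2 p + be * lin b0 b1 b2 p"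
  unfolding lin_def assms[symmetric] by (simp add: algebra_simps)

lemma W_cont:
  assumes gc: "continuous_on {0..1} \<gamma>" and on: "\<And>s. s \<in> {0..1} \<Longrightarrow> \<gamma> s \<in> E_aff - E_rat"
    and rel: "al * a0 + be * bp = e0" "al * a1 + be * bq = e1" "al * a2 + be * br = e2"
    and nz: "al \<noteq> 0" "be \<noteq> 0" "\<And>p. p \<in> E_aff - E_rat \<Longrightarrow> lin a0 a1 a2 p \<noteq> 0"
      "\<And>p. p \<in> E_aff - E_rat \<Longrightarrow> lin bp bq br p \<noteq> 0" "\<And>p. p \<in> E_aff - E_rat \<Longrightarrow> lin e0 e1 e2 p \<noteq> 0"
  shows "continuous_on {0..1} (\<lambda>s. W al a0 a1 a2 e0 e1 e2 (\<gamma> s))"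
proof -
  have q: "continuous_on {0..1} (\<lambda>s. al * lin a0 a1 a2 (\<gamma> s) / lin e0 e1 e2 (\<gamma> s))"
    unfolding lin_def
    by (intro continuous_intros gc) (use nz(5)[OF on, unfolded lin_def] in auto)
  have r: "(\<lambda>s. al * lin a0 a1 a2 (\<gamma> s) / lin e0 e1 e2 (\<gamma> s)) ` {0..1} \<subseteq> - {0, 1}"
  proof
    fix w assume "w \<in> (\<lambda>s. al * lin a0 a1 a2 (\<gamma> s) / lin e0 e1 e2 (\<gamma> s)) ` {0..1}"
    then obtain s where s: "s \<in> {0..1}" "w = al * lin a0 a1 a2 (\<gamma> s) / lin e0 e1 e2 (\<gamma> s)" by auto
    note nzs = nz(3,4,5)[OF on[OF s(1)]]
    have e: "1 - w = be * lin bp bq br (\<gamma> s) / lin e0 e1 e2 (\<gamma> s)"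
      using alg_omega(1)[OF lin_rel[OF rel] refl nz(1,2) nzs] s(2) by simp
    have "w \<noteq> 0" using s(2) nzs nz(1) by simp
    moreover have "1 - w \<noteq> 0" using e nzs nz(2) by simp
    ultimately show "w \<in> - {0, 1}" by auto
  qed
  have Dc: "continuous_on (- {0, 1}) Dfun"
    by (intro continuous_at_imp_continuous_on ballI Dfun_cont) auto
  show ?thesis unfolding W_def by (rule continuous_on_compose2[OF Dc q r])
qed

lemma integrand_lin:
  assumes g: "(\<gamma> has_vector_derivative v) (at t)"
  shows "ln (cmod (lin a0 a1 a2 (\<gamma> t))) * Im (vector_derivative (lin b0 b1 b2 \<circ> \<gamma>) (at t) / lin b0 b1 b2 (\<gamma> t))
    - ln (cmod (lin b0 b1 b2 (\<gamma> t))) * Im (vector_derivative (lin a0 a1 a2 \<circ> \<gamma>) (at t) / lin a0 a1 a2 (\<gamma> t))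
    = LL (\<gamma> t) a0 a1 a2 * DD (\<gamma> t) v b0 b1 b2 - LL (\<gamma> t) b0 b1 b2 * DD (\<gamma> t) v a0 a1 a2"
proof -
  have "vector_derivative (lin b0 b1 b2 \<circ> \<gamma>) (at t) = dl b1 b2 v"
    using vector_derivative_at[OF lin_deriv[OF g, of b0 b1 b2]] by (simp add: o_def)
  moreover have "vector_derivative (lin a0 a1 a2 \<circ> \<gamma>) (at t) = dl a1 a2 v"
    using vector_derivative_at[OF lin_deriv[OF g, of a0 a1 a2]] by (simp add: o_def)
  ultimately show ?thesis by (simp add: LL_def DD_def)
qed

lemma f_lin: "fx = lin 0 1 0" "fy = lin 0 0 1" "fx1 = lin (-1) 1 0" "fy1 = lin 2 (-2) 1"
  "fx2 = lin (-1) 1 0" "fy2 = lin 1 (-1) 1"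
  by (auto simp: fun_eq_iff fx_def fy_def fx1_def fy1_def fx2_def fy2_def lin_def algebra_simps)

lemma int_comb:
  fixes f g :: "real \<Rightarrow> real"
  assumes "((\<lambda>t. f t + c * g t) has_integral 0) S" "c \<noteq> 0"
  shows "integral S f = - c * integral S g"
proof (cases "g integrable_on S")
  case True
  have "((\<lambda>t. (f t + c * g t) - c * g t) has_integral (0 - c * integral S g)) S"
    by (intro has_integral_diff assms(1) has_integral_mult_right integrable_integral True)
  then have "(f has_integral (- c * integral S g)) S" by simp
  then show ?thesis by (rule integral_unique)
next
  case False
  have "\<not> f integrable_on S"
  proof
    assume fi: "f integrable_on S"
    have "(\<lambda>t. (f t + c * g t) - f t) integrable_on S"
      by (intro integrable_diff fi) (use assms(1) in blast)
    then have "(\<lambda>t. (1 / c) *\<^sub>R ((f t + c * g t) - f t)) integrable_on S"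
      by (rule integrable_cmul)
    then have "(\<lambda>t. (1 / c) * ((f t + c * g t) - f t)) integrable_on S" by simp
    moreover have "(\<lambda>t. (1 / c) * ((f t + c * g t) - f t)) = g" using assms(2) by (auto simp: fun_eq_iff field_simps)
    ultimately show False using False by simp
  qed
  then show ?thesis using False by (simp add: not_integrable_integral)
qed

lemma PhiA_deriv:
  assumes g: "(\<gamma> has_vector_derivative v) (at t)" and p: "\<gamma> t \<in> E_aff" "\<gamma> t \<notin> E_rat"
  shows "((\<lambda>s. PhiA \<gamma> s) has_real_derivative OmA (\<gamma> t) v) (at t)"
proof -
  note nz = nz_all[OF DiffI[OF p]]
  have o24: "((\<lambda>s. W (-1) 0 0 1 1 0 0 (\<gamma> s)) has_real_derivative Om (\<gamma> t) v (-1) 1 0 0 1 1 0 1 1 0 0) (at t)"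
    by (rule omega_lin[OF g]) (simp_all add: nz)
  have o30: "((\<lambda>s. W 1 1 0 1 0 1 1 (\<gamma> s)) has_real_derivative Om (\<gamma> t) v 1 1 1 0 1 (-1) 1 0 0 1 1) (at t)"
    by (rule omega_lin[OF g]) (simp_all add: nz)
  have o22: "((\<lambda>s. W (1/2) 1 1 0 1 0 0 (\<gamma> s)) has_real_derivative Om (\<gamma> t) v (1/2) (-1/2) 1 1 0 (-1) 1 0 1 0 0) (at t)"
    by (rule omega_lin[OF g]) (simp_all add: nz)
  have o4: "((\<lambda>s. W (-1/3) (-2) 1 0 1 0 0 (\<gamma> s)) has_real_derivative Om (\<gamma> t) v (-1/3) (1/3) (-2) 1 0 1 1 0 1 0 0) (at t)"
    by (rule omega_lin[OF g]) (simp_all add: nz)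
  have o19: "((\<lambda>s. W 1 1 1 1 1 0 0 (\<gamma> s)) has_real_derivative Om (\<gamma> t) v 1 (-1) 1 1 1 0 1 1 1 0 0) (at t)"
    by (rule omega_lin[OF g]) (simp_all add: nz)
  have o23: "((\<lambda>s. W 1 1 1 0 1 0 0 (\<gamma> s)) has_real_derivative Om (\<gamma> t) v 1 (-1) 1 1 0 0 1 0 1 0 0) (at t)"
    by (rule omega_lin[OF g]) (simp_all add: nz)
  have o18: "((\<lambda>s. W 1 1 1 1 0 1 0 (\<gamma> s)) has_real_derivative Om (\<gamma> t) v 1 (-1) 1 1 1 1 0 1 0 1 0) (at t)"
    by (rule omega_lin[OF g]) (simp_all add: nz)
  have o21: "((\<lambda>s. W (1/2) 1 1 0 0 1 0 (\<gamma> s)) has_real_derivative Om (\<gamma> t) v (1/2) (1/2) 1 1 0 (-1) 1 0 0 1 0) (at t)"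
    by (rule omega_lin[OF g]) (simp_all add: nz)
  have o27: "((\<lambda>s. W (1/2) (-1) 2 1 (-1) 1 0 (\<gamma> s)) has_real_derivative Om (\<gamma> t) v (1/2) (-1/2) (-1) 2 1 1 0 1 (-1) 1 0) (at t)"
    by (rule omega_lin[OF g]) (simp_all add: nz)
  have o16: "((\<lambda>s. W 1 1 1 1 0 0 1 (\<gamma> s)) has_real_derivative Om (\<gamma> t) v 1 (-1) 1 1 1 1 1 0 0 0 1) (at t)"
    by (rule omega_lin[OF g]) (simp_all add: nz)
  have o2: "((\<lambda>s. W (2/3) (-2) 1 0 (-1) 1 0 (\<gamma> s)) has_real_derivative Om (\<gamma> t) v (2/3) (1/3) (-2) 1 0 1 1 0 (-1) 1 0) (at t)"
    by (rule omega_lin[OF g]) (simp_all add: nz)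
  have o17: "((\<lambda>s. W (-1) 1 1 1 1 (-1) 1 (\<gamma> s)) has_real_derivative Om (\<gamma> t) v (-1) 2 1 1 1 1 0 1 1 (-1) 1) (at t)"
    by (rule omega_lin[OF g]) (simp_all add: nz)
  show ?thesis unfolding PhiA_def OmA_def
    by (intro DERIV_add DERIV_cmult o24 o30 o22 o4 o19 o23 o18 o21 o27 o16 o2 o17)
qed

lemma PhiB_deriv:
  assumes g: "(\<gamma> has_vector_derivative v) (at t)" and p: "\<gamma> t \<in> E_aff" "\<gamma> t \<notin> E_rat"
  shows "((\<lambda>s. PhiB \<gamma> s) has_real_derivative OmB (\<gamma> t) v) (at t)"
proof -
  note nz = nz_all[OF DiffI[OF p]]
  have o24: "((\<lambda>s. W (-1) 0 0 1 1 0 0 (\<gamma> s)) has_real_derivative Om (\<gamma> t) v (-1) 1 0 0 1 1 0 1 1 0 0) (at t)"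
    by (rule omega_lin[OF g]) (simp_all add: nz)
  have o30: "((\<lambda>s. W 1 1 0 1 0 1 1 (\<gamma> s)) has_real_derivative Om (\<gamma> t) v 1 1 1 0 1 (-1) 1 0 0 1 1) (at t)"
    by (rule omega_lin[OF g]) (simp_all add: nz)
  have o22: "((\<lambda>s. W (1/2) 1 1 0 1 0 0 (\<gamma> s)) has_real_derivative Om (\<gamma> t) v (1/2) (-1/2) 1 1 0 (-1) 1 0 1 0 0) (at t)"
    by (rule omega_lin[OF g]) (simp_all add: nz)
  have o19: "((\<lambda>s. W 1 1 1 1 1 0 0 (\<gamma> s)) has_real_derivative Om (\<gamma> t) v 1 (-1) 1 1 1 0 1 1 1 0 0) (at t)"
    by (rule omega_lin[OF g]) (simp_all add: nz)
  have o23: "((\<lambda>s. W 1 1 1 0 1 0 0 (\<gamma> s)) has_real_derivative Om (\<gamma> t) v 1 (-1) 1 1 0 0 1 0 1 0 0) (at t)"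
    by (rule omega_lin[OF g]) (simp_all add: nz)
  have o21: "((\<lambda>s. W (1/2) 1 1 0 0 1 0 (\<gamma> s)) has_real_derivative Om (\<gamma> t) v (1/2) (1/2) 1 1 0 (-1) 1 0 0 1 0) (at t)"
    by (rule omega_lin[OF g]) (simp_all add: nz)
  have o27: "((\<lambda>s. W (1/2) (-1) 2 1 (-1) 1 0 (\<gamma> s)) has_real_derivative Om (\<gamma> t) v (1/2) (-1/2) (-1) 2 1 1 0 1 (-1) 1 0) (at t)"
    by (rule omega_lin[OF g]) (simp_all add: nz)
  have o16: "((\<lambda>s. W 1 1 1 1 0 0 1 (\<gamma> s)) has_real_derivative Om (\<gamma> t) v 1 (-1) 1 1 1 1 1 0 0 0 1) (at t)"
    by (rule omega_lin[OF g]) (simp_all add: nz)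
  have o17: "((\<lambda>s. W (-1) 1 1 1 1 (-1) 1 (\<gamma> s)) has_real_derivative Om (\<gamma> t) v (-1) 2 1 1 1 1 0 1 1 (-1) 1) (at t)"
    by (rule omega_lin[OF g]) (simp_all add: nz)
  show ?thesis unfolding PhiB_def OmB_def
    by (intro DERIV_add DERIV_cmult o24 o30 o22 o19 o23 o21 o27 o16 o17)
qed

lemma PhiA_cont:
  assumes gc: "continuous_on {0..1} \<gamma>" and on: "\<And>s. s \<in> {0..1} \<Longrightarrow> \<gamma> s \<in> E_aff - E_rat"
  shows "continuous_on {0..1} (\<lambda>s. PhiA \<gamma> s)"
proof -
  have c24: "continuous_on {0..1} (\<lambda>s. W (-1) 0 0 1 1 0 0 (\<gamma> s))"
    by (rule W_cont[OF gc on, where be="1" and bp="1" and bq="0" and br="1"]) (simp_all add: nz_all)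
  have c30: "continuous_on {0..1} (\<lambda>s. W 1 1 0 1 0 1 1 (\<gamma> s))"
    by (rule W_cont[OF gc on, where be="1" and bp="(-1)" and bq="1" and br="0"]) (simp_all add: nz_all)
  have c22: "continuous_on {0..1} (\<lambda>s. W (1/2) 1 1 0 1 0 0 (\<gamma> s))"
    by (rule W_cont[OF gc on, where be="(-1/2)" and bp="(-1)" and bq="1" and br="0"]) (simp_all add: nz_all)
  have c4: "continuous_on {0..1} (\<lambda>s. W (-1/3) (-2) 1 0 1 0 0 (\<gamma> s))"
    by (rule W_cont[OF gc on, where be="(1/3)" and bp="1" and bq="1" and br="0"]) (simp_all add: nz_all)
  have c19: "continuous_on {0..1} (\<lambda>s. W 1 1 1 1 1 0 0 (\<gamma> s))"
    by (rule W_cont[OF gc on, where be="(-1)" and bp="0" and bq="1" and br="1"]) (simp_all add: nz_all)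
  have c23: "continuous_on {0..1} (\<lambda>s. W 1 1 1 0 1 0 0 (\<gamma> s))"
    by (rule W_cont[OF gc on, where be="(-1)" and bp="0" and bq="1" and br="0"]) (simp_all add: nz_all)
  have c18: "continuous_on {0..1} (\<lambda>s. W 1 1 1 1 0 1 0 (\<gamma> s))"
    by (rule W_cont[OF gc on, where be="(-1)" and bp="1" and bq="0" and br="1"]) (simp_all add: nz_all)
  have c21: "continuous_on {0..1} (\<lambda>s. W (1/2) 1 1 0 0 1 0 (\<gamma> s))"
    by (rule W_cont[OF gc on, where be="(1/2)" and bp="(-1)" and bq="1" and br="0"]) (simp_all add: nz_all)
  have c27: "continuous_on {0..1} (\<lambda>s. W (1/2) (-1) 2 1 (-1) 1 0 (\<gamma> s))"
    by (rule W_cont[OF gc on, where be="(-1/2)" and bp="1" and bq="0" and br="1"]) (simp_all add: nz_all)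
  have c16: "continuous_on {0..1} (\<lambda>s. W 1 1 1 1 0 0 1 (\<gamma> s))"
    by (rule W_cont[OF gc on, where be="(-1)" and bp="1" and bq="1" and br="0"]) (simp_all add: nz_all)
  have c2: "continuous_on {0..1} (\<lambda>s. W (2/3) (-2) 1 0 (-1) 1 0 (\<gamma> s))"
    by (rule W_cont[OF gc on, where be="(1/3)" and bp="1" and bq="1" and br="0"]) (simp_all add: nz_all)
  have c17: "continuous_on {0..1} (\<lambda>s. W (-1) 1 1 1 1 (-1) 1 (\<gamma> s))"
    by (rule W_cont[OF gc on, where be="2" and bp="1" and bq="0" and br="1"]) (simp_all add: nz_all)
  show ?thesis unfolding PhiA_def
    by (intro continuous_intros c24 c30 c22 c4 c19 c23 c18 c21 c27 c16 c2 c17)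
qed

lemma PhiB_cont:
  assumes gc: "continuous_on {0..1} \<gamma>" and on: "\<And>s. s \<in> {0..1} \<Longrightarrow> \<gamma> s \<in> E_aff - E_rat"
  shows "continuous_on {0..1} (\<lambda>s. PhiB \<gamma> s)"
proof -
  have c24: "continuous_on {0..1} (\<lambda>s. W (-1) 0 0 1 1 0 0 (\<gamma> s))"
    by (rule W_cont[OF gc on, where be="1" and bp="1" and bq="0" and br="1"]) (simp_all add: nz_all)
  have c30: "continuous_on {0..1} (\<lambda>s. W 1 1 0 1 0 1 1 (\<gamma> s))"
    by (rule W_cont[OF gc on, where be="1" and bp="(-1)" and bq="1" and br="0"]) (simp_all add: nz_all)
  have c22: "continuous_on {0..1} (\<lambda>s. W (1/2) 1 1 0 1 0 0 (\<gamma> s))"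
    by (rule W_cont[OF gc on, where be="(-1/2)" and bp="(-1)" and bq="1" and br="0"]) (simp_all add: nz_all)
  have c19: "continuous_on {0..1} (\<lambda>s. W 1 1 1 1 1 0 0 (\<gamma> s))"
    by (rule W_cont[OF gc on, where be="(-1)" and bp="0" and bq="1" and br="1"]) (simp_all add: nz_all)
  have c23: "continuous_on {0..1} (\<lambda>s. W 1 1 1 0 1 0 0 (\<gamma> s))"
    by (rule W_cont[OF gc on, where be="(-1)" and bp="0" and bq="1" and br="0"]) (simp_all add: nz_all)
  have c21: "continuous_on {0..1} (\<lambda>s. W (1/2) 1 1 0 0 1 0 (\<gamma> s))"
    by (rule W_cont[OF gc on, where be="(1/2)" and bp="(-1)" and bq="1" and br="0"]) (simp_all add: nz_all)
  have c27: "continuous_on {0..1} (\<lambda>s. W (1/2) (-1) 2 1 (-1) 1 0 (\<gamma> s))"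
    by (rule W_cont[OF gc on, where be="(-1/2)" and bp="1" and bq="0" and br="1"]) (simp_all add: nz_all)
  have c16: "continuous_on {0..1} (\<lambda>s. W 1 1 1 1 0 0 1 (\<gamma> s))"
    by (rule W_cont[OF gc on, where be="(-1)" and bp="1" and bq="1" and br="0"]) (simp_all add: nz_all)
  have c17: "continuous_on {0..1} (\<lambda>s. W (-1) 1 1 1 1 (-1) 1 (\<gamma> s))"
    by (rule W_cont[OF gc on, where be="2" and bp="1" and bq="0" and br="1"]) (simp_all add: nz_all)
  show ?thesis unfolding PhiB_def
    by (intro continuous_intros c24 c30 c22 c19 c23 c21 c27 c16 c17)
qed

theorem mainTheorem3:
  fixes \<gamma> :: "real \<Rightarrow> complex \<times> complex"
  assumes "valid_path \<gamma>"
    and "pathfinish \<gamma> = pathstart \<gamma>"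
    and "path_image \<gamma> \<subseteq> E_aff - E_rat"
    and "generate (homology_group 1 E_top) {loop_class E_top \<gamma>} = H1_minus"
  shows "eta_integral fx1 fy1 \<gamma> = - 7 * eta_integral fx fy \<gamma> \<and>
         eta_integral fx2 fy2 \<gamma> = - 5 * eta_integral fx fy \<gamma>"
proof -
  have vp: "\<gamma> piecewise_C1_differentiable_on {0..1}" using assms(1) by (simp add: valid_path_def)
  then have gc: "continuous_on {0..1} \<gamma>" by (simp add: piecewise_C1_differentiable_on_def)
  from vp obtain K where K: "finite K" "\<gamma> C1_differentiable_on ({0..1} - K)"
    by (auto simp: piecewise_C1_differentiable_on_def)
  then obtain D where D: "\<And>x. x \<in> {0..1} - K \<Longrightarrow> (\<gamma> has_vector_derivative D x) (at x)"
    unfolding C1_differentiable_on_def by blast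
  have on: "\<And>s. s \<in> {0..1} \<Longrightarrow> \<gamma> s \<in> E_aff - E_rat" using assms(3) unfolding path_image_def by blast
  have loop: "\<gamma> 1 = \<gamma> 0" using assms(2) by (simp add: pathfinish_def pathstart_def)
  define IA where "IA = (\<lambda>t. ln (cmod (fx1 (\<gamma> t))) * Im (vector_derivative (fy1 \<circ> \<gamma>) (at t) / fy1 (\<gamma> t))
      - ln (cmod (fy1 (\<gamma> t))) * Im (vector_derivative (fx1 \<circ> \<gamma>) (at t) / fx1 (\<gamma> t)))"
  define IB where "IB = (\<lambda>t. ln (cmod (fx2 (\<gamma> t))) * Im (vector_derivative (fy2 \<circ> \<gamma>) (at t) / fy2 (\<gamma> t))
      - ln (cmod (fy2 (\<gamma> t))) * Im (vector_derivative (fx2 \<circ> \<gamma>) (at t) / fx2 (\<gamma> t)))"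
  define I0 where "I0 = (\<lambda>t. ln (cmod (fx (\<gamma> t))) * Im (vector_derivative (fy \<circ> \<gamma>) (at t) / fy (\<gamma> t))
      - ln (cmod (fy (\<gamma> t))) * Im (vector_derivative (fx \<circ> \<gamma>) (at t) / fx (\<gamma> t)))"
  have eA: "eta_integral fx1 fy1 \<gamma> = integral {0..1} IA" by (simp add: eta_integral_def IA_def)
  have eB: "eta_integral fx2 fy2 \<gamma> = integral {0..1} IB" by (simp add: eta_integral_def IB_def)
  have e0: "eta_integral fx fy \<gamma> = integral {0..1} I0" by (simp add: eta_integral_def I0_def)
  have pointwise: "OmA (\<gamma> t) (D t) = IA t + 7 * I0 t \<and> OmB (\<gamma> t) (D t) = IB t + 5 * I0 t
      \<and> ((\<lambda>s. PhiA \<gamma> s) has_real_derivative OmA (\<gamma> t) (D t)) (at t)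
      \<and> ((\<lambda>s. PhiB \<gamma> s) has_real_derivative OmB (\<gamma> t) (D t)) (at t)"
    if t: "t \<in> {0<..<1} - K" for t
  proof -
    have t01: "t \<in> {0..1} - K" "t \<in> {0<..<1}" using t by auto
    note g = D[OF t01(1)]
    have pt: "\<gamma> t \<in> E_aff - E_rat" using on t01 by auto
    have tg: "Tg (\<gamma> t) (D t) = 0" by (rule tangent[OF g t01(2)]) (use on in auto)
    note r = rels[OF pt tg]
    have "OmA (\<gamma> t) (D t) = IA t + 7 * I0 t"
      unfolding algA[OF r] IA_def I0_def f_lin integrand_lin[OF g] ..
    moreover have "OmB (\<gamma> t) (D t) = IB t + 5 * I0 t"
      unfolding algB[OF r] IB_def I0_def f_lin integrand_lin[OF g] ..
    moreover have "\<gamma> t \<in> E_aff" "\<gamma> t \<notin> E_rat" using pt by auto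
    ultimately show ?thesis using PhiA_deriv[OF g] PhiB_deriv[OF g] by blast
  qed
  have derA: "((\<lambda>s. PhiA \<gamma> s) has_vector_derivative (IA t + 7 * I0 t)) (at t)" if "t \<in> {0<..<1} - K" for t
  proof -
    have e: "OmA (\<gamma> t) (D t) = IA t + 7 * I0 t" and d: "((\<lambda>s. PhiA \<gamma> s) has_real_derivative OmA (\<gamma> t) (D t)) (at t)"
      using pointwise[OF that] by blast+
    show ?thesis using d unfolding e has_real_derivative_iff_has_vector_derivative .
  qed
  have derB: "((\<lambda>s. PhiB \<gamma> s) has_vector_derivative (IB t + 5 * I0 t)) (at t)" if "t \<in> {0<..<1} - K" for t
  proof -
    have e: "OmB (\<gamma> t) (D t) = IB t + 5 * I0 t" and d: "((\<lambda>s. PhiB \<gamma> s) has_real_derivative OmB (\<gamma> t) (D t)) (at t)"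
      using pointwise[OF that] by blast+
    show ?thesis using d unfolding e has_real_derivative_iff_has_vector_derivative .
  qed
  have "((\<lambda>t. IA t + 7 * I0 t) has_integral (PhiA \<gamma> 1 - PhiA \<gamma> 0)) {0..1}"
    by (rule fundamental_theorem_of_calculus_interior_strong[OF K(1) _ derA PhiA_cont[OF gc on]]) simp
  moreover have "PhiA \<gamma> 1 - PhiA \<gamma> 0 = 0" by (simp add: PhiA_def loop)
  ultimately have iA: "((\<lambda>t. IA t + 7 * I0 t) has_integral 0) {0..1}" by simp
  have "((\<lambda>t. IB t + 5 * I0 t) has_integral (PhiB \<gamma> 1 - PhiB \<gamma> 0)) {0..1}"
    by (rule fundamental_theorem_of_calculus_interior_strong[OF K(1) _ derB PhiB_cont[OF gc on]]) simp
  moreover have "PhiB \<gamma> 1 - PhiB \<gamma> 0 = 0" by (simp add: PhiB_def loop)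
  ultimately have iB: "((\<lambda>t. IB t + 5 * I0 t) has_integral 0) {0..1}" by simp
  have A: "integral {0..1} IA = - 7 * integral {0..1} I0" by (rule int_comb[OF iA]) simp
  have B: "integral {0..1} IB = - 5 * integral {0..1} I0" by (rule int_comb[OF iB]) simp
  show ?thesis using eA eB e0 A B by simp
qed

end
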